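(* For every $c\ge0$, the function $x\mapsto g(x;c)/\phi(x)$ is increasing on $(c,\infty)$.
   Context: Let $\phi$ denote the standard normal density. Let $\gamma_0$ be a probability density on $\mathbb{R}$ that is symmetric about $0$ and unimodal, and for $c\in\mathbb{R}$ set $g(x;c)=\int_{-\infty}^{\infty}\phi(x-\mu)\gamma_0(\mu-c)\,d\mu$. *)

theory Defs
  imports "HOL-Probability.Probability"
begin

definition g_mix :: "(real \<Rightarrow> real) \<Rightarrow> real \<Rightarrow> real \<Rightarrow> real" where
  "g_mix \<gamma>0 x c = (\<integral>\<mu>. std_normal_density (x - \<mu>) * \<gamma>0 (\<mu> - c) \<partial>lborel)"

end

theory Submission
  imports Defs
begin

lemma E_bound: "exp (a*t - t^2/2) \<le> exp (a^2/2::real)"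
proof -
  have "a*t - t^2/2 \<le> a^2/2" using sum_squares_ge_zero[of "a-t" 0]
    by (simp add: power2_eq_square algebra_simps)
  then show ?thesis by simp
qed

lemma E_int:
  fixes \<gamma>0 :: "real \<Rightarrow> real"
  assumes "integrable lborel \<gamma>0" "\<And>x. \<gamma>0 x \<ge> 0"
  shows "integrable lborel (\<lambda>t. exp (a*t - t^2/2) * \<gamma>0 t)"
proof (rule Bochner_Integration.integrable_bound[where f="\<lambda>t. exp (a^2/2) * \<gamma>0 t"])
  show "integrable lborel (\<lambda>t. exp (a^2/2) * \<gamma>0 t)" using assms(1) by simp
  have [measurable]: "\<gamma>0 \<in> borel_measurable lborel" using assms(1) by (rule borel_measurable_integrable)
  show "(\<lambda>t. exp (a*t - t^2/2) * \<gamma>0 t) \<in> borel_measurable lborel" by measurable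
  show "AE x in lborel. norm (exp (a*x - x^2/2) * \<gamma>0 x) \<le> norm (exp (a^2/2) * \<gamma>0 x)"
    using assms(2) E_bound[of a] by (auto simp: abs_mult intro!: mult_right_mono)
qed

lemma cosh_abs_eq: "cosh \<bar>z\<bar> = cosh (z::real)"
  by (cases "z \<ge> 0") auto

lemma cosh_le_abs: "\<bar>u\<bar> \<le> \<bar>v\<bar> \<Longrightarrow> cosh u \<le> cosh (v::real)"
  by (metis cosh_abs_eq cosh_real_nonneg_le_iff abs_ge_zero)

lemma cosh_less_abs: "\<bar>u\<bar> < \<bar>v\<bar> \<Longrightarrow> cosh u < cosh (v::real)"
  by (metis cosh_abs_eq cosh_real_nonneg_less_iff abs_ge_zero)

theorem lemma1:
  fixes \<gamma>0 :: "real \<Rightarrow> real" and c :: real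
  assumes nonneg: "\<And>x. \<gamma>0 x \<ge> 0"
    and integrable: "integrable lborel \<gamma>0"
    and total: "(\<integral>x. \<gamma>0 x \<partial>lborel) = 1"
    and symmetric: "\<And>x. \<gamma>0 (- x) = \<gamma>0 x"
    and unimodal_left: "mono_on {..0} \<gamma>0"
    and unimodal_right: "antimono_on {0..} \<gamma>0"
    and c_nonneg: "c \<ge> 0"
  shows "strict_mono_on {c<..} (\<lambda>x. g_mix \<gamma>0 x c / std_normal_density x)"
proof -
  have meas[measurable]: "\<gamma>0 \<in> borel_measurable lborel" using integrable by (rule borel_measurable_integrable)
  define K where "K a = (\<integral>t. exp (a*t - t^2/2) * \<gamma>0 t \<partial>lborel)" for a
  have Kint: "integrable lborel (\<lambda>t. exp (a*t - t^2/2) * \<gamma>0 t)" for a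
    using E_int[OF integrable nonneg] .
  have Knn: "K a \<ge> 0" for a
    unfolding K_def using nonneg by (intro integral_nonneg_AE) auto
  have F: "g_mix \<gamma>0 x c / std_normal_density x = exp (x*c - c^2/2) * K (x - c)" for x
  proof -
    have "g_mix \<gamma>0 x c / std_normal_density x
        = (\<integral>\<mu>. std_normal_density (x - \<mu>) * \<gamma>0 (\<mu> - c) / std_normal_density x \<partial>lborel)"
      unfolding g_mix_def by simp
    also have "\<dots> = (\<integral>\<mu>. exp (x*\<mu> - \<mu>^2/2) * \<gamma>0 (\<mu> - c) \<partial>lborel)"
    proof (rule Bochner_Integration.integral_cong[OF refl])
      fix \<mu>
      have "std_normal_density (x - \<mu>) / std_normal_density x = exp (- ((x - \<mu>)^2) / 2) / exp (- (x^2) / 2)"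
        by (simp add: std_normal_density_def)
      also have "\<dots> = exp (- ((x - \<mu>)^2) / 2 - (- (x^2) / 2))" by (simp only: exp_diff)
      also have "\<dots> = exp (x*\<mu> - \<mu>^2/2)" by (rule arg_cong[where f=exp]) (simp add: power2_eq_square field_simps)
      finally show "std_normal_density (x - \<mu>) * \<gamma>0 (\<mu> - c) / std_normal_density x
          = exp (x*\<mu> - \<mu>^2/2) * \<gamma>0 (\<mu> - c)" by (metis times_divide_eq_left mult.commute)
    qed
    also have "\<dots> = (\<integral>t. exp (x*(c + 1*t) - (c + 1*t)^2/2) * \<gamma>0 ((c + 1*t) - c) \<partial>lborel)"
      by (subst lborel_integral_real_affine[where c=1 and t=c]) auto
    also have "\<dots> = (\<integral>t. exp (x*c - c^2/2) * (exp ((x-c)*t - t^2/2) * \<gamma>0 t) \<partial>lborel)"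
    proof (rule Bochner_Integration.integral_cong[OF refl])
      fix t
      have "exp (x*(c + 1*t) - (c + 1*t)^2/2) = exp ((x*c - c^2/2) + ((x-c)*t - t^2/2))"
        by (simp add: power2_eq_square algebra_simps)
      then show "exp (x*(c + 1*t) - (c + 1*t)^2/2) * \<gamma>0 ((c + 1*t) - c)
          = exp (x*c - c^2/2) * (exp ((x-c)*t - t^2/2) * \<gamma>0 t)"
        by (simp add: exp_add)
    qed
    also have "\<dots> = exp (x*c - c^2/2) * K (x - c)" unfolding K_def by simp
    finally show ?thesis .
  qed
  have Ksym: "K a = K (-a)" for a
  proof -
    have "K a = (\<integral>t. exp (a*(0 + -1*t) - (0 + -1*t)^2/2) * \<gamma>0 (0 + -1*t) \<partial>lborel)"
      unfolding K_def by (subst lborel_integral_real_affine[where c="-1" and t=0]) auto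
    also have "\<dots> = K (-a)" unfolding K_def
      by (rule Bochner_Integration.integral_cong[OF refl]) (simp add: symmetric)
    finally show ?thesis .
  qed
  define H where "H a t = cosh (a*t) * exp (- (t^2) / 2) * \<gamma>0 t" for a t
  have Heq: "H a = (\<lambda>t. (exp (a*t - t^2/2) * \<gamma>0 t + exp ((-a)*t - t^2/2) * \<gamma>0 t) / 2)" for a
  proof
    fix t
    have "exp (a*t - t^2/2) = exp (a*t) * exp (- (t^2) / 2)" by (simp add: exp_add[symmetric])
    moreover have "exp ((-a)*t - t^2/2) = exp (-(a*t)) * exp (- (t^2) / 2)" by (simp add: exp_add[symmetric])
    ultimately show "H a t = (exp (a*t - t^2/2) * \<gamma>0 t + exp ((-a)*t - t^2/2) * \<gamma>0 t) / 2"
      unfolding H_def cosh_field_def by (simp add: field_simps)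
  qed
  have Hint: "integrable lborel (H a)" for a
    unfolding Heq using Kint[of a] Kint[of "-a"] by simp
  have KH: "K a = (\<integral>t. H a t \<partial>lborel)" for a
  proof -
    have "(\<integral>t. H a t \<partial>lborel) = (K a + K (-a)) / 2"
      unfolding Heq K_def using Kint[of a] Kint[of "-a"] by simp
    then show ?thesis using Ksym[of a] by simp
  qed
  have Kstrict: "K a < K b" if ab: "0 \<le> a" "a < b" for a b
  proof -
    have pw: "H a t \<le> H b t" for t
    proof -
      have "cosh (a*t) \<le> cosh (b*t)"
        using ab by (intro cosh_le_abs) (simp add: abs_mult mult_right_mono)
      then show ?thesis unfolding H_def using nonneg[of t]
        by (intro mult_right_mono) auto
    qed
    have pws: "H a t < H b t" if "t \<noteq> 0" "\<gamma>0 t \<noteq> 0" for t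
    proof -
      have "cosh (a*t) < cosh (b*t)"
        using ab that by (intro cosh_less_abs) (simp add: abs_mult mult_strict_right_mono)
      then show ?thesis unfolding H_def using nonneg[of t] that
        by (intro mult_strict_right_mono) auto
    qed
    have "K a \<le> K b" unfolding KH using pw Hint by (intro integral_mono) auto
    moreover have "K a \<noteq> K b"
    proof
      assume eq: "K a = K b"
      have "(\<integral>t. H b t - H a t \<partial>lborel) = 0" using eq Hint unfolding KH by simp
      then have "AE t in lborel. H b t - H a t = 0"
        using Hint pw by (subst (asm) integral_nonneg_eq_0_iff_AE) auto
      then have "AE t in lborel. \<gamma>0 t = 0"
        using AE_lborel_singleton[of 0]
        by eventually_elim (use pws in force)
      then have "(\<integral>t. \<gamma>0 t \<partial>lborel) = 0"
        by (rule integral_eq_zero_AE)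
      then show False using total by simp
    qed
    ultimately show ?thesis by simp
  qed
  show ?thesis
  proof (rule strict_mono_onI)
    fix x y assume xy: "x \<in> {c<..}" "y \<in> {c<..}" "x < y"
    have "exp (x*c - c^2/2) \<le> exp (y*c - c^2/2)"
      using xy c_nonneg by (simp add: mult_right_mono)
    moreover have "K (x - c) < K (y - c)" using xy by (intro Kstrict) auto
    ultimately have "exp (x*c - c^2/2) * K (x - c) < exp (y*c - c^2/2) * K (y - c)"
      using Knn[of "x-c"] exp_gt_zero[of "y*c - c^2/2"]
      by (meson mult_right_mono mult_strict_left_mono order_le_less_trans)
    then show "g_mix \<gamma>0 x c / std_normal_density x < g_mix \<gamma>0 y c / std_normal_density y"
      unfolding F .
  qed
qed

end
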